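(* (1) Any voting method satisfying positive involvement and the Condorcet winner criterion refines the defensible set for linear profiles, i.e. $F(\mathbf{P})\subseteq D(\mathbf{P})$ for every linear profile $\mathbf{P}$. (2) Any voting method satisfying positive involvement and the weak Condorcet winner criterion refines the defensible set for all profiles, i.e. $F(\mathbf{P})\subseteq D(\mathbf{P})$ for every profile $\mathbf{P}$.
   Context: Fix infinite sets $\mathcal{X}$ (alternatives) and $\mathcal{V}$ (voters). A profile $\mathbf{P}$ is a function from a nonempty finite set $V(\mathbf{P})\subseteq\mathcal{V}$ to the set of strict weak orders on a nonempty finite set $X(\mathbf{P})\subseteq\mathcal{X}$; $(x,y)\in\mathbf{P}(i)$ means voter $i$ strictly prefers $x$ to $y$. $\mathbf{P}$ is linear if every $\mathbf{P}(i)$ is a linear order. $\mathrm{Support}_\mathbf{P}(a,b)=|\{i\in V(\mathbf{P}) : (a,b)\in\mathbf{P}(i)\}|$ and $\mathrm{Margin}_\mathbf{P}(x,y)=\mathrm{Support}_\mathbf{P}(x,y)-\mathrm{Support}_\mathbf{P}(y,x)$. A voting method is a function $F$ assigning to each profile $\mathbf{P}$ a nonempty $F(\mathbf{P})\subseteq X(\mathbf{P})$. Defensible set: $D(\mathbf{P})=\{x\in X(\mathbf{P}) : \text{for all } y\in X(\mathbf{P}) \text{ there is } z\in X(\mathbf{P}) \text{ with } \mathrm{Margin}_\mathbf{P}(z,y)\geq\mathrm{Margin}_\mathbf{P}(y,x)\}$. Positive involvement: if $x\in F(\mathbf{P})$ and $\mathbf{P}'$ is obtained from $\mathbf{P}$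 by adding one new voter who ranks $x$ uniquely first, then $x\in F(\mathbf{P}')$. Condorcet winner criterion: if $x$ is a Condorcet winner of $\mathbf{P}$ ($\mathrm{Margin}_\mathbf{P}(x,y)>0$ for all $y\neq x$) then $F(\mathbf{P})=\{x\}$. Weak Condorcet winner criterion: if $\mathbf{P}$ has a weak Condorcet winner (an $x$ with $\mathrm{Margin}_\mathbf{P}(x,y)\geq 0$ for all $y\neq x$), then every element of $F(\mathbf{P})$ is a weak Condorcet winner. *)

theory Defs
  imports Main
begin

text \<open>A profile is represented as a triple (V, X, R): a set of voters V, a set of
alternatives X, and R i the strict preference relation of voter i ((x,y) in R i means
voter i strictly prefers x to y).  Values of R outside V are normalised to the empty
relation, so that a profile in the paper's sense corresponds to exactly one triple.\<close>

type_synonym ('v, 'x) profile = "'v set \<times> 'x set \<times> ('v \<Rightarrow> ('x \<times> 'x) set)"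

definition voters :: "('v, 'x) profile \<Rightarrow> 'v set" where
  "voters P = fst P"

definition alts :: "('v, 'x) profile \<Rightarrow> 'x set" where
  "alts P = fst (snd P)"

definition pref :: "('v, 'x) profile \<Rightarrow> 'v \<Rightarrow> ('x \<times> 'x) set" where
  "pref P = snd (snd P)"

definition strict_weak_order_on :: "'x set \<Rightarrow> ('x \<times> 'x) set \<Rightarrow> bool" where
  "strict_weak_order_on X R \<longleftrightarrow>
     R \<subseteq> X \<times> X \<and>
     (\<forall>x\<in>X. (x, x) \<notin> R) \<and>
     (\<forall>x\<in>X. \<forall>y\<in>X. \<forall>z\<in>X. (x, y) \<in> R \<longrightarrow> (y, z) \<in> R \<longrightarrow> (x, z) \<in> R) \<and>
     (\<forall>x\<in>X. \<forall>y\<in>X. \<forall>z\<in>X. (x, y) \<in> R \<longrightarrow> (x, z) \<in> R \<or> (z, y) \<in> R)"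

definition strict_linear_order_on :: "'x set \<Rightarrow> ('x \<times> 'x) set \<Rightarrow> bool" where
  "strict_linear_order_on X R \<longleftrightarrow>
     strict_weak_order_on X R \<and>
     (\<forall>x\<in>X. \<forall>y\<in>X. x \<noteq> y \<longrightarrow> (x, y) \<in> R \<or> (y, x) \<in> R)"

definition is_profile :: "('v, 'x) profile \<Rightarrow> bool" where
  "is_profile P \<longleftrightarrow>
     finite (voters P) \<and> voters P \<noteq> {} \<and>
     finite (alts P) \<and> alts P \<noteq> {} \<and>
     (\<forall>i\<in>voters P. strict_weak_order_on (alts P) (pref P i)) \<and>
     (\<forall>i. i \<notin> voters P \<longrightarrow> pref P i = {})"

definition linear_profile :: "('v, 'x) profile \<Rightarrow> bool" where
  "linear_profile P \<longleftrightarrow> is_profile P \<and>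
     (\<forall>i\<in>voters P. strict_linear_order_on (alts P) (pref P i))"

definition support :: "('v, 'x) profile \<Rightarrow> 'x \<Rightarrow> 'x \<Rightarrow> nat" where
  "support P a b = card {i \<in> voters P. (a, b) \<in> pref P i}"

definition margin :: "('v, 'x) profile \<Rightarrow> 'x \<Rightarrow> 'x \<Rightarrow> int" where
  "margin P x y = int (support P x y) - int (support P y x)"

definition voting_method :: "(('v, 'x) profile \<Rightarrow> 'x set) \<Rightarrow> bool" where
  "voting_method F \<longleftrightarrow> (\<forall>P. is_profile P \<longrightarrow> F P \<noteq> {} \<and> F P \<subseteq> alts P)"

definition defensible :: "('v, 'x) profile \<Rightarrow> 'x set" where
  "defensible P = {x \<in> alts P. \<forall>y\<in>alts P. \<exists>z\<in>alts P. margin P z y \<ge> margin P y x}"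

definition add_voter_ranking_first :: "('v, 'x) profile \<Rightarrow> 'x \<Rightarrow> ('v, 'x) profile \<Rightarrow> bool" where
  "add_voter_ranking_first P x P' \<longleftrightarrow>
     (\<exists>i L. i \<notin> voters P \<and> strict_weak_order_on (alts P) L \<and>
        (\<forall>y\<in>alts P. y \<noteq> x \<longrightarrow> (x, y) \<in> L) \<and>
        P' = (insert i (voters P), alts P, (pref P)(i := L)))"

definition positive_involvement :: "(('v, 'x) profile \<Rightarrow> 'x set) \<Rightarrow> bool" where
  "positive_involvement F \<longleftrightarrow>
     (\<forall>P P' x. is_profile P \<longrightarrow> x \<in> F P \<longrightarrow> add_voter_ranking_first P x P' \<longrightarrow> x \<in> F P')"

definition condorcet_winner :: "('v, 'x) profile \<Rightarrow> 'x \<Rightarrow> bool" where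
  "condorcet_winner P x \<longleftrightarrow> x \<in> alts P \<and> (\<forall>y\<in>alts P. y \<noteq> x \<longrightarrow> margin P x y > 0)"

definition weak_condorcet_winner :: "('v, 'x) profile \<Rightarrow> 'x \<Rightarrow> bool" where
  "weak_condorcet_winner P x \<longleftrightarrow> x \<in> alts P \<and> (\<forall>y\<in>alts P. y \<noteq> x \<longrightarrow> margin P x y \<ge> 0)"

definition condorcet_winner_criterion :: "(('v, 'x) profile \<Rightarrow> 'x set) \<Rightarrow> bool" where
  "condorcet_winner_criterion F \<longleftrightarrow>
     (\<forall>P x. is_profile P \<longrightarrow> condorcet_winner P x \<longrightarrow> F P = {x})"

definition weak_condorcet_winner_criterion :: "(('v, 'x) profile \<Rightarrow> 'x set) \<Rightarrow> bool" where
  "weak_condorcet_winner_criterion F \<longleftrightarrow>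
     (\<forall>P. is_profile P \<longrightarrow> (\<exists>x. weak_condorcet_winner P x) \<longrightarrow>
          (\<forall>y\<in>F P. weak_condorcet_winner P y))"

end

theory Submission
  imports Defs
begin

lemma margin_self[simp]: "margin P a a = 0"
  by (simp add: margin_def)

lemma margin_anti: "margin P a b = - margin P b a"
  by (simp add: margin_def)

lemma support_add:
  assumes "finite V" "i \<notin> V"
  shows "support (insert i V, X, R(i:=L)) a b = support (V, X, R) a b + (if (a,b) \<in> L then 1 else 0)"
proof -
  have eq: "{j \<in> insert i V. (a, b) \<in> (R(i:=L)) j} =
     (if (a,b) \<in> L then insert i {j \<in> V. (a, b) \<in> R j} else {j \<in> V. (a, b) \<in> R j})"
    using assms by auto
  have fin: "finite {j \<in> V. (a, b) \<in> R j}" using assms(1) by simp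
  have "card {j \<in> insert i V. (a, b) \<in> (R(i:=L)) j} = card {j \<in> V. (a, b) \<in> R j} + (if (a,b) \<in> L then 1 else 0)"
    unfolding eq using fin assms(2) by simp
  then show ?thesis unfolding support_def voters_def pref_def by simp
qed

lemma iter:
  assumes prof: "is_profile P" and inf: "infinite (UNIV::'v set)"
    and pi: "positive_involvement (F :: ('v,'x) profile \<Rightarrow> 'x set)" and xF: "x \<in> F P"
    and swo: "strict_weak_order_on (alts P) L" and top: "\<forall>w\<in>alts P. w \<noteq> x \<longrightarrow> (x,w) \<in> L"
  shows "\<exists>Q. is_profile Q \<and> alts Q = alts P \<and> x \<in> F Q \<and>
     (\<forall>a b. support Q a b = support P a b + (if (a,b) \<in> L then n else 0))"
proof (induction n)
  case 0
  then show ?case using prof xF by (intro exI[of _ P]) auto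
next
  case (Suc n)
  then obtain Q where Q: "is_profile Q" "alts Q = alts P" "x \<in> F Q"
     "\<forall>a b. support Q a b = support P a b + (if (a,b) \<in> L then n else 0)" by blast
  have fin: "finite (voters Q)" using Q(1) by (simp add: is_profile_def)
  obtain i where i: "i \<notin> voters Q" using ex_new_if_finite[OF inf fin] by blast
  define Q' where "Q' = (insert i (voters Q), alts Q, (pref Q)(i := L))"
  have Qeq: "Q = (voters Q, alts Q, pref Q)" by (simp add: voters_def alts_def pref_def)
  have pQ': "is_profile Q'"
    using Q(1) Q(2) swo i unfolding Q'_def is_profile_def
    by (auto simp: voters_def alts_def pref_def)
  have add: "add_voter_ranking_first Q x Q'"
    unfolding add_voter_ranking_first_def Q'_def
    using i swo top Q(2) by auto
  have xQ': "x \<in> F Q'" using pi Q(1) Q(3) add unfolding positive_involvement_def by blast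
  have "support Q' a b = support Q a b + (if (a,b) \<in> L then 1 else 0)" for a b
    unfolding Q'_def using support_add[OF fin i, of "alts Q" "pref Q" L a b] Qeq by metis
  then have "\<forall>a b. support Q' a b = support P a b + (if (a,b) \<in> L then Suc n else 0)"
    using Q(4) by auto
  moreover have "alts Q' = alts P" using Q(2) by (simp add: Q'_def alts_def)
  ultimately show ?case using pQ' xQ' by blast
qed

lemma parity:
  assumes "linear_profile P" "a \<in> alts P" "b \<in> alts P" "a \<noteq> b"
  shows "even (margin P a b + int (card (voters P)))"
proof -
  let ?S1 = "{i \<in> voters P. (a, b) \<in> pref P i}"
  let ?S2 = "{i \<in> voters P. (b, a) \<in> pref P i}"
  have fin: "finite (voters P)" using assms(1) by (simp add: linear_profile_def is_profile_def)
  have lin: "\<forall>i\<in>voters P. strict_linear_order_on (alts P) (pref P i)"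
    using assms(1) by (simp add: linear_profile_def)
  have disj: "?S1 \<inter> ?S2 = {}"
  proof -
    { fix i assume i: "i \<in> voters P" "(a,b) \<in> pref P i" "(b,a) \<in> pref P i"
      then have "(a,a) \<in> pref P i" using lin assms(2,3)
        unfolding strict_linear_order_on_def strict_weak_order_on_def by blast
      then have False using lin i(1) assms(2)
        unfolding strict_linear_order_on_def strict_weak_order_on_def by blast }
    then show ?thesis by blast
  qed
  have un: "?S1 \<union> ?S2 = voters P"
    using lin assms(2,3,4) unfolding strict_linear_order_on_def by blast
  have "card ?S1 + card ?S2 = card (voters P)"
    using card_Un_disjoint[of ?S1 ?S2] fin disj un by simp
  then show ?thesis unfolding margin_def support_def by presburger
qed

lemma key:
  assumes prof: "is_profile P" and inf: "infinite (UNIV::'v set)"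
    and vm: "voting_method F"
    and pi: "positive_involvement (F :: ('v,'x) profile \<Rightarrow> 'x set)" and xF: "x \<in> F P"
    and nd: "x \<notin> defensible P"
  shows "\<exists>y Q k. is_profile Q \<and> alts Q = alts P \<and> x \<in> F Q \<and> y \<in> alts P \<and> y \<noteq> x \<and>
     margin Q y x = 1 \<and> margin P y x = k \<and> (\<forall>z\<in>alts P. margin P z y < k) \<and>
     (\<forall>w\<in>alts P. w \<noteq> x \<longrightarrow> w \<noteq> y \<longrightarrow> margin Q y w = margin P y w + k - 1)"
proof -
  have xA: "x \<in> alts P" using vm prof xF unfolding voting_method_def by blast
  then obtain y where yA: "y \<in> alts P" and yz: "\<forall>z\<in>alts P. margin P z y < margin P y x"
    using nd unfolding defensible_def by force
  define k where "k = margin P y x"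
  have kpos: "k > 0" using yz yA unfolding k_def by force
  have yx: "y \<noteq> x" using kpos unfolding k_def by auto
  define L where "L = {(x,w) | w. w \<in> alts P \<and> w \<noteq> x} \<union> {(y,w) | w. w \<in> alts P \<and> w \<noteq> x \<and> w \<noteq> y}"
  have swo: "strict_weak_order_on (alts P) L"
    unfolding strict_weak_order_on_def L_def using xA yA yx by auto
  have top: "\<forall>w\<in>alts P. w \<noteq> x \<longrightarrow> (x,w) \<in> L" unfolding L_def by auto
  obtain Q where Q: "is_profile Q" "alts Q = alts P" "x \<in> F Q"
     "\<forall>a b. support Q a b = support P a b + (if (a,b) \<in> L then nat (k-1) else 0)"
    using iter[OF prof inf pi xF swo top, of "nat (k-1)"] by blast
  have m: "margin Q a b = margin P a b + (if (a,b) \<in> L then k-1 else 0) - (if (b,a) \<in> L then k-1 else 0)" for a b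
    using Q(4) kpos unfolding margin_def by auto
  have "margin Q y x = 1" using m[of y x] yx xA yA unfolding L_def k_def by auto
  moreover have "\<forall>w\<in>alts P. w \<noteq> x \<longrightarrow> w \<noteq> y \<longrightarrow> margin Q y w = margin P y w + k - 1"
    using m yx unfolding L_def by auto
  ultimately show ?thesis using Q yA yx yz k_def by blast
qed

theorem lemma1:
  assumes "infinite (UNIV :: 'x set)" and "infinite (UNIV :: 'v set)"
  shows "(\<forall>F :: ('v, 'x) profile \<Rightarrow> 'x set.
            voting_method F \<longrightarrow> positive_involvement F \<longrightarrow> condorcet_winner_criterion F \<longrightarrow>
            (\<forall>P. linear_profile P \<longrightarrow> F P \<subseteq> defensible P))
       \<and> (\<forall>F :: ('v, 'x) profile \<Rightarrow> 'x set.
            voting_method F \<longrightarrow> positive_involvement F \<longrightarrow> weak_condorcet_winner_criterion F \<longrightarrow>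
            (\<forall>P. is_profile P \<longrightarrow> F P \<subseteq> defensible P))"
proof (intro conjI allI impI subsetI)
  fix F :: "('v, 'x) profile \<Rightarrow> 'x set" and P x
  assume vm: "voting_method F" and pi: "positive_involvement F"
    and cw: "condorcet_winner_criterion F" and lp: "linear_profile P" and xF: "x \<in> F P"
  have prof: "is_profile P" using lp by (simp add: linear_profile_def)
  show "x \<in> defensible P"
  proof (rule ccontr)
    assume nd: "x \<notin> defensible P"
    obtain y Q k where Q: "is_profile Q" "alts Q = alts P" "x \<in> F Q" "y \<in> alts P" "y \<noteq> x"
     "margin Q y x = 1" "margin P y x = k" "\<forall>z\<in>alts P. margin P z y < k"
     "\<forall>w\<in>alts P. w \<noteq> x \<longrightarrow> w \<noteq> y \<longrightarrow> margin Q y w = margin P y w + k - 1"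
      using key[OF prof assms(2) vm pi xF nd] by blast
    have xA: "x \<in> alts P" using vm prof xF unfolding voting_method_def by blast
    have "condorcet_winner Q y"
      unfolding condorcet_winner_def
    proof (intro conjI ballI impI)
      show "y \<in> alts Q" using Q by simp
    next
      fix w assume w: "w \<in> alts Q" "w \<noteq> y"
      show "0 < margin Q y w"
      proof (cases "w = x")
        case True then show ?thesis using Q by simp
      next
        case False
        have e1: "even (margin P w y + int (card (voters P)))"
          using parity[OF lp, of w y] w Q by auto
        have e2: "even (margin P y x + int (card (voters P)))"
          using parity[OF lp, of y x] xA Q by auto
        have "margin P w y < k" using Q(8) w Q(2) by auto
        have "even ((margin P w y + int (card (voters P))) - (margin P y x + int (card (voters P))))"
          using e1 e2 by simp
        then have "even (margin P w y - k)" using Q(7) by simp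
        then obtain d where d: "margin P w y - k = 2 * d" by (rule evenE) blast
        with \<open>margin P w y < k\<close> have "margin P w y \<le> k - 2" by presburger
        then show ?thesis using Q(9) w False Q(2) margin_anti[of P y w] by auto
      qed
    qed
    then have "F Q = {y}" using cw Q(1) unfolding condorcet_winner_criterion_def by blast
    then show False using Q(3) Q(5) by auto
  qed
next
  fix F :: "('v, 'x) profile \<Rightarrow> 'x set" and P x
  assume vm: "voting_method F" and pi: "positive_involvement F"
    and cw: "weak_condorcet_winner_criterion F" and prof: "is_profile P" and xF: "x \<in> F P"
  show "x \<in> defensible P"
  proof (rule ccontr)
    assume nd: "x \<notin> defensible P"
    obtain y Q k where Q: "is_profile Q" "alts Q = alts P" "x \<in> F Q" "y \<in> alts P" "y \<noteq> x"
     "margin Q y x = 1" "margin P y x = k" "\<forall>z\<in>alts P. margin P z y < k"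
     "\<forall>w\<in>alts P. w \<noteq> x \<longrightarrow> w \<noteq> y \<longrightarrow> margin Q y w = margin P y w + k - 1"
      using key[OF prof assms(2) vm pi xF nd] by blast
    have "weak_condorcet_winner Q y"
      unfolding weak_condorcet_winner_def
    proof (intro conjI ballI impI)
      show "y \<in> alts Q" using Q by simp
    next
      fix w assume w: "w \<in> alts Q" "w \<noteq> y"
      show "0 \<le> margin Q y w"
      proof (cases "w = x")
        case True then show ?thesis using Q by simp
      next
        case False
        have "margin P w y < k" using Q(8) w Q(2) by auto
        then show ?thesis using Q(9) w False Q(2) margin_anti[of P y w] by auto
      qed
    qed
    then have "weak_condorcet_winner Q x" using cw Q(1) Q(3)
      unfolding weak_condorcet_winner_criterion_def by blast
    moreover have "margin Q x y = -1" using Q(6) margin_anti[of Q x y] by simp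
    ultimately show False using Q(4) Q(5) Q(2) unfolding weak_condorcet_winner_def by force
  qed
qed

end
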